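(* Fix integers $k,N\ge1$. For each prime $p$ let $\Omega(p)$ be a subset of $(\mathbb{Z}/p^N\mathbb{Z})^k$. For $x>0$ and $m\in\mathbb{Z}^k$ put $P(x;m):=\#\{p\le x\text{ prime}: m\bmod p^N\in\Omega(p)\}$ and $P(x):=\sum_{p\le x}\#\Omega(p)\,p^{-Nk}$. Let $B=\prod_{j=1}^k[M_j,M_j+N_j]\subset\mathbb{R}^k$ be a box with $N_j\ge x^{2N}$ for all $j$, and let $V(B)=\prod_jN_j$. Then \[\sum_{m\in B\cap\mathbb{Z}^k}\big(P(x;m)-P(x)\big)^2\le c_{k,N}\,V(B)\,P(x),\] where $c_{k,N}>0$ is a constant depending only on $k$ and $N$. *)

theory Defs
  imports "HOL-Computational_Algebra.Primes" Complex_Main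
begin

text \<open>Vectors in Z^k are modelled as functions nat => int that vanish at indices >= k.
  (Z/qZ)^k is modelled by its canonical representatives: vectors with entries in [0,q).\<close>

definition residue_vecs :: "nat \<Rightarrow> int \<Rightarrow> (nat \<Rightarrow> int) set" where
  "residue_vecs k q = {v. (\<forall>j<k. 0 \<le> v j \<and> v j < q) \<and> (\<forall>j\<ge>k. v j = 0)}"

definition vec_mod :: "nat \<Rightarrow> int \<Rightarrow> (nat \<Rightarrow> int) \<Rightarrow> (nat \<Rightarrow> int)" where
  "vec_mod k q m = (\<lambda>j. if j < k then m j mod q else 0)"

definition Pcount :: "nat \<Rightarrow> nat \<Rightarrow> (nat \<Rightarrow> (nat \<Rightarrow> int) set) \<Rightarrow> real \<Rightarrow> (nat \<Rightarrow> int) \<Rightarrow> nat" where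
  "Pcount k N \<Omega> x m = card {p::nat. prime p \<and> real p \<le> x \<and> vec_mod k (int p ^ N) m \<in> \<Omega> p}"

definition Pexp :: "nat \<Rightarrow> nat \<Rightarrow> (nat \<Rightarrow> (nat \<Rightarrow> int) set) \<Rightarrow> real \<Rightarrow> real" where
  "Pexp k N \<Omega> x = (\<Sum>p\<in>{p::nat. prime p \<and> real p \<le> x}. real (card (\<Omega> p)) / real p ^ (N * k))"

definition box_points :: "nat \<Rightarrow> (nat \<Rightarrow> real) \<Rightarrow> (nat \<Rightarrow> real) \<Rightarrow> (nat \<Rightarrow> int) set" where
  "box_points k M L = {m. (\<forall>j<k. M j \<le> real_of_int (m j) \<and> real_of_int (m j) \<le> M j + L j) \<and> (\<forall>j\<ge>k. m j = 0)}"

end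

theory Submission imports Defs "HOL-Number_Theory.Cong" "HOL-Library.FuncSet" begin

lemma cos_sum_period:
  fixes T :: nat and n a :: int and \<phi> :: real
  assumes T: "T > 0"
  shows "(\<Sum>t\<in>{a..<a + int T}. cos (2*pi*n*t/T + \<phi>)) = (if int T dvd n then T * cos \<phi> else 0)"
proof -
  have img: "{a..<a + int T} = (\<lambda>u. a + int u) ` {..<T}"
  proof (rule set_eqI, rule iffI)
    fix t assume "t \<in> {a..<a + int T}"
    then have "t = a + int (nat (t - a))" "nat (t - a) < T" by auto
    then show "t \<in> (\<lambda>u. a + int u) ` {..<T}" by blast
  qed auto
  have "(\<Sum>t\<in>{a..<a + int T}. cos (2*pi*n*t/T + \<phi>)) = (\<Sum>u<T. cos (2*pi*n*(a + int u)/T + \<phi>))"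
    unfolding img by (subst sum.reindex) (auto simp: inj_on_def)
  also have "\<dots> = (if int T dvd n then T * cos \<phi> else 0)"
  proof (cases "int T dvd n")
    case True
    then obtain c where c: "n = int T * c" by blast
    have "cos (2*pi*n*(a + int u)/T + \<phi>) = cos \<phi>" for u
    proof -
      define m where "m = c * (a + int u)"
      have "2*pi*n*(a + int u)/T + \<phi> = \<phi> + (2*pi) * of_int m"
        using T by (simp add: c m_def field_simps)
      thus ?thesis using cos_add[of \<phi> "(2*pi) * of_int m"] cos_int_2pin[of m] sin_int_2pin[of m] by (simp add: add.commute)
    qed
    then show ?thesis using True by simp
  next
    case False
    define \<theta> where "\<theta> = 2*pi*n/T"
    define z where "z = cis \<theta>"
    have z1: "z \<noteq> 1"
    proof
      assume "z = 1"
      then have "cos \<theta> = 1" unfolding z_def by (metis cis.sel(1) one_complex.sel(1))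
      then obtain m :: int where "\<theta> = m * 2 * pi" by (auto simp: cos_one_2pi_int)
      then have "real_of_int n = real_of_int (m * int T)" using T by (simp add: \<theta>_def field_simps)
      then have "n = m * T" by (simp only: of_int_eq_iff)
      then show False using False by simp
    qed
    have zT: "z ^ T = 1" unfolding z_def \<theta>_def using T by (simp add: DeMoivre)
    have geo: "(\<Sum>u<T. z ^ u) = 0" using z1 zT by (simp add: sum_gp_strict)
    have "(\<Sum>u<T. cis (2*pi*n*(a + int u)/T + \<phi>)) = cis (2*pi*n*a/T + \<phi>) * (\<Sum>u<T. z ^ u)"
      unfolding sum_distrib_left z_def \<theta>_def
      by (rule sum.cong) (auto simp: DeMoivre cis_mult field_simps)
    then have "(\<Sum>u<T. cis (2*pi*n*(a + int u)/T + \<phi>)) = 0" using geo by simp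
    then have "Re (\<Sum>u<T. cis (2*pi*n*(a + int u)/T + \<phi>)) = 0" by simp
    then show ?thesis using False by (simp add: Re_sum)
  qed
  finally show ?thesis .
qed

lemma ind_cos:
  fixes D :: nat and n :: int
  assumes D: "D > 0"
  shows "(if int D dvd n then 1 else 0) = (\<Sum>r\<in>{0..<int D}. cos (2*pi*n*r/D)) / D"
  using cos_sum_period[OF D, of n 0 0] D by simp

lemma cos_ge_half:
  fixes y :: real assumes "0 \<le> y" "y \<le> pi/3" shows "cos y \<ge> 1/2"
proof -
  have "y \<le> pi" using assms pi_gt_zero by linarith
  then have "cos (pi/3) \<le> cos y" using assms pi_gt_zero by (subst cos_mono_le_eq) auto
  then show ?thesis by (simp add: cos_60)
qed

definition Fk :: "nat \<Rightarrow> nat \<Rightarrow> int \<Rightarrow> real" where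
  "Fk K T t = (\<Sum>l<K. \<Sum>l'<K. cos (2*pi*(int l - int l')*t/T)) / (T*K)"

lemma Fk_nonneg: "Fk K T t \<ge> 0"
proof -
  define \<theta> where "\<theta> = 2*pi*t/T"
  have "(\<Sum>l<K. \<Sum>l'<K. cos (2*pi*(int l - int l')*t/T))
      = (\<Sum>l<K. \<Sum>l'<K. cos (\<theta>*l) * cos (\<theta>*l') + sin (\<theta>*l) * sin (\<theta>*l'))"
  proof (intro sum.cong refl)
    fix l l' assume "l \<in> {..<K}" "l' \<in> {..<K}"
    have "2*pi*(int l - int l')*t/T = \<theta>*l - \<theta>*l'" by (cases "T = 0") (simp_all add: \<theta>_def field_simps)
    then show "cos (2*pi*(int l - int l')*t/T) = cos (\<theta>*l) * cos (\<theta>*l') + sin (\<theta>*l) * sin (\<theta>*l')"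
      by (simp add: cos_diff)
  qed
  also have "\<dots> = (\<Sum>l<K. cos (\<theta>*l))^2 + (\<Sum>l<K. sin (\<theta>*l))^2"
    by (simp add: power2_eq_square sum_product sum.distrib)
  finally show ?thesis unfolding Fk_def by simp
qed

lemma Fk_lower:
  assumes K: "K > 0" and R: "R > 0" and T: "T = 6*K*R" and t: "\<bar>t\<bar> \<le> int R"
  shows "Fk K T t \<ge> real K / (2 * real T)"
proof -
  have c: "cos (2*pi*(int l - int l')*t/T) \<ge> 1/2" if "l < K" "l' < K" for l l'
  proof -
    have "\<bar>int l - int l'\<bar> \<le> int K" using that by linarith
    then have "\<bar>(int l - int l')*t\<bar> \<le> int K * int R" using t
      unfolding abs_mult by (intro mult_mono) auto
    then have a: "\<bar>real_of_int ((int l - int l')*t)\<bar> \<le> real K * real R"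
    proof -
      have "real_of_int \<bar>(int l - int l')*t\<bar> \<le> real_of_int (int K * int R)"
        using \<open>\<bar>(int l - int l')*t\<bar> \<le> int K * int R\<close> by (simp only: of_int_le_iff)
      then show ?thesis by simp
    qed
    have "\<bar>2*pi*(int l - int l')*t/T\<bar> = 2*pi*\<bar>real_of_int ((int l - int l')*t)\<bar>/T"
      by (simp add: abs_mult abs_divide)
    also have "\<dots> \<le> 2*pi*(real K * real R)/T"
      using a T K R by (intro divide_right_mono mult_left_mono) auto
    also have "\<dots> = pi/3" using T K R by (simp add: field_simps)
    finally have b: "\<bar>2*pi*(int l - int l')*t/T\<bar> \<le> pi/3" .
    have "cos \<bar>2*pi*(int l - int l')*t/T\<bar> \<ge> 1/2"
      using b by (intro cos_ge_half) auto
    then show ?thesis by (simp only: cos_abs_real)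
  qed
  have "(\<Sum>l<K. \<Sum>l'<K. (1/2::real)) \<le> (\<Sum>l<K. \<Sum>l'<K. cos (2*pi*(int l - int l')*t/T))"
    using c by (intro sum_mono) auto
  then have "real K * real K / 2 \<le> (\<Sum>l<K. \<Sum>l'<K. cos (2*pi*(int l - int l')*t/T))" by simp
  then have "real K * real K / 2 / (T*K) \<le> Fk K T t" unfolding Fk_def
    using T K R by (intro divide_right_mono) auto
  also have "real K * real K / 2 / (T*K) = real K / (2 * real T)" using K by (simp add: field_simps)
  finally show ?thesis .
qed

lemma dvd_small_zero:
  fixes x d :: int
  assumes "d dvd x" "\<bar>x\<bar> < \<bar>d\<bar>" shows "x = 0"
proof (rule ccontr)
  assume "x \<noteq> 0"
  then have "\<bar>d\<bar> \<le> \<bar>x\<bar>" using dvd_imp_le_int assms(1) by blast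
  then show False using assms(2) by simp
qed

lemma key_sum:
  fixes T D E :: nat and d r a i \<gamma> :: int
  assumes TE: "T = D * E" and D: "D > 0" and d: "\<bar>d\<bar> < int E" and r: "0 \<le> r" "r < int D"
  shows "(\<Sum>t\<in>{a..<a + int T}. cos (2*pi*d*(t - i)/T) * cos (2*pi*(t - \<gamma>)*r/D))
       = (if d = 0 \<and> r = 0 then real T else 0)"
proof -
  have E: "E > 0" using d by simp
  have T: "T > 0" using TE D E by simp
  define n1 where "n1 = d - r * int E"
  define n2 where "n2 = d + r * int E"
  define \<phi>1 where "\<phi>1 = - 2*pi*(d*i - r*E*\<gamma>)/T"
  define \<phi>2 where "\<phi>2 = - 2*pi*(d*i + r*E*\<gamma>)/T"
  have eq: "cos (2*pi*d*(t - i)/T) * cos (2*pi*(t - \<gamma>)*r/D)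
      = (cos (2*pi*n1*t/T + \<phi>1) + cos (2*pi*n2*t/T + \<phi>2)) / 2" for t :: int
  proof -
    have rT: "real T = real D * real E" using TE by simp
    have 1: "2*pi*d*(t - i)/T - 2*pi*(t - \<gamma>)*r/D = 2*pi*n1*t/T + \<phi>1"
      unfolding n1_def \<phi>1_def using D E rT by (simp add: field_simps)
    have 2: "2*pi*d*(t - i)/T + 2*pi*(t - \<gamma>)*r/D = 2*pi*n2*t/T + \<phi>2"
      unfolding n2_def \<phi>2_def using D E rT by (simp add: field_simps)
    show ?thesis unfolding cos_times_cos 1 2 ..
  qed
  have S: "(\<Sum>t\<in>{a..<a + int T}. cos (2*pi*d*(t - i)/T) * cos (2*pi*(t - \<gamma>)*r/D))
      = ((if int T dvd n1 then T * cos \<phi>1 else 0) + (if int T dvd n2 then T * cos \<phi>2 else 0)) / 2"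
    unfolding eq sum_divide_distrib[symmetric] sum.distrib cos_sum_period[OF T] ..
  have dv: "int T dvd d + c * r * int E \<longleftrightarrow> d = 0 \<and> r = 0" if c: "c = 1 \<or> c = -1" for c
  proof
    assume h: "int T dvd d + c * r * int E"
    have "int E dvd int T" using TE by simp
    with h have "int E dvd d + c * r * int E" by (rule dvd_trans[rotated])
    then have "int E dvd d" by (simp add: dvd_add_left_iff)
    then have d0: "d = 0" using d dvd_small_zero by fastforce
    then have "int D * int E dvd (c * r) * int E" using h TE by (simp add: mult.commute)
    then have "int D dvd c * r" using E by simp
    then have "int D dvd r" using c by auto
    then have "r = 0" using r dvd_small_zero by fastforce
    with d0 show "d = 0 \<and> r = 0" ..
  qed simp
  have dv1: "int T dvd n1 \<longleftrightarrow> d = 0 \<and> r = 0" using dv[of "-1"] unfolding n1_def by simp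
  have dv2: "int T dvd n2 \<longleftrightarrow> d = 0 \<and> r = 0" using dv[of "1"] unfolding n2_def by simp
  show ?thesis
  proof (cases "d = 0 \<and> r = 0")
    case True
    then have "\<phi>1 = 0" "\<phi>2 = 0" by (simp_all add: \<phi>1_def \<phi>2_def)
    then show ?thesis unfolding S dv1 dv2 using True by simp
  next
    case False
    show ?thesis unfolding S dv1 dv2 if_not_P[OF False] by simp
  qed
qed

lemma Fk_res:
  fixes K T D :: nat and a i \<gamma> :: int
  assumes K: "K > 0" and D: "D > 0" and DT: "D dvd T" and KD: "K * D \<le> T"
    and \<gamma>: "0 \<le> \<gamma>" "\<gamma> < int D"
  shows "(\<Sum>t\<in>{a..<a+int T}. Fk K T (t - i) * (if t mod int D = \<gamma> then 1 else 0)) = 1 / real D"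
proof -
  obtain E where TE: "T = D * E" using DT by blast
  have KE: "K \<le> E" using KD TE D by simp
  have T: "T > 0" using TE D K KE by simp
  have ind: "(if t mod int D = \<gamma> then 1 else 0 :: real) = (\<Sum>r\<in>{0..<int D}. cos (2*pi*(t-\<gamma>)*r/D)) / D" for t
  proof -
    have g: "\<gamma> mod int D = \<gamma>" using \<gamma> by simp
    have "(t mod int D = \<gamma>) = (int D dvd (t - \<gamma>))"
      using mod_eq_dvd_iff[of t "int D" \<gamma>] g by simp
    then show ?thesis using ind_cos[OF D, of "t-\<gamma>"] by (simp add: mult.commute mult.left_commute)
  qed
  define c where "c = real T * real K * real D"
  have "(\<Sum>t\<in>{a..<a+int T}. Fk K T (t - i) * (if t mod int D = \<gamma> then 1 else 0))
     = (\<Sum>t\<in>{a..<a+int T}. \<Sum>l<K. \<Sum>l'<K. \<Sum>r\<in>{0..<int D}.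
          cos (2*pi*(int l - int l')*(t - i)/T) * cos (2*pi*(t-\<gamma>)*r/D) / c)"
    unfolding Fk_def ind c_def
    by (simp add: sum_distrib_left sum_distrib_right sum_divide_distrib mult.commute mult.left_commute)
  also have "\<dots> = (\<Sum>l<K. \<Sum>l'<K. \<Sum>r\<in>{0..<int D}.
          (\<Sum>t\<in>{a..<a+int T}. cos (2*pi*(int l - int l')*(t - i)/T) * cos (2*pi*(t-\<gamma>)*r/D)) / c)"
    by (simp add: sum.swap[of _ "{a..<a + int T}"] sum_divide_distrib)
  also have "\<dots> = (\<Sum>l<K. \<Sum>l'<K. \<Sum>r\<in>{0..<int D}.
          (if l' = l then (if r = 0 then real T / c else 0) else 0))"
  proof (intro sum.cong refl)
    fix l l' r assume l: "l \<in> {..<K}" and l': "l' \<in> {..<K}" and r: "r \<in> {0..<int D}"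
    have "\<bar>int l - int l'\<bar> < int E" using l l' KE by auto
    from key_sum[OF TE D this, where r=r and a=a and i=i and \<gamma>=\<gamma>] r
    show "(\<Sum>t\<in>{a..<a+int T}. cos (2*pi*(int l - int l')*(t - i)/T) * cos (2*pi*(t-\<gamma>)*r/D)) / c
       = (if l' = l then (if r = 0 then real T / c else 0) else 0)"
      by auto
  qed
  also have "\<dots> = (\<Sum>l<K. real T / c)"
  proof (intro sum.cong refl)
    fix l assume l: "l \<in> {..<K}"
    have i: "(\<Sum>r\<in>{0..<int D}. if l' = l then (if r = 0 then real T / c else 0) else 0)
        = (if l' = l then real T / c else 0)" for l'
      using D by (cases "l' = l") (simp_all add: sum.delta)
    show "(\<Sum>l'<K. \<Sum>r\<in>{0..<int D}. if l' = l then (if r = 0 then real T / c else 0) else 0) = real T / c"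
      unfolding i using l by (simp add: sum.delta)
  qed
  also have "\<dots> = 1 / real D" unfolding c_def using K T D by simp
  finally show ?thesis .
qed

lemma crt_mod:
  fixes P Q \<alpha> \<beta> :: int
  assumes P: "P > 0" and Q: "Q > 0" and cop: "coprime P Q"
    and \<alpha>: "0 \<le> \<alpha>" "\<alpha> < P" and \<beta>: "0 \<le> \<beta>" "\<beta> < Q"
  shows "\<exists>\<gamma>. 0 \<le> \<gamma> \<and> \<gamma> < P * Q \<and> (\<forall>t. (t mod P = \<alpha> \<and> t mod Q = \<beta>) \<longleftrightarrow> t mod (P * Q) = \<gamma>)"
proof -
  obtain x where x: "[x = \<alpha>] (mod P)" "[x = \<beta>] (mod Q)"
    using binary_chinese_remainder_int[OF cop] by blast
  have xa: "x mod P = \<alpha>" using x(1) \<alpha> unfolding cong_def by simp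
  have xb: "x mod Q = \<beta>" using x(2) \<beta> unfolding cong_def by simp
  show ?thesis
  proof (intro exI conjI allI)
    show "0 \<le> x mod (P * Q)" "x mod (P * Q) < P * Q" using P Q by simp_all
    fix t
    have "(t mod P = \<alpha> \<and> t mod Q = \<beta>) \<longleftrightarrow> (P dvd t - x \<and> Q dvd t - x)"
      using xa xb mod_eq_dvd_iff[of t P x] mod_eq_dvd_iff[of t Q x] by simp
    also have "\<dots> \<longleftrightarrow> P * Q dvd t - x"
      using cop divides_mult dvd_mult_left dvd_mult_right by metis
    also have "\<dots> \<longleftrightarrow> t mod (P * Q) = x mod (P * Q)" by (simp add: mod_eq_dvd_iff)
    finally show "(t mod P = \<alpha> \<and> t mod Q = \<beta>) \<longleftrightarrow> t mod (P * Q) = x mod (P * Q)" .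
  qed
qed

definition wgt :: "nat \<Rightarrow> nat \<Rightarrow> int set \<Rightarrow> int \<Rightarrow> real" where
  "wgt K T J t = (\<Sum>i\<in>J. Fk K T (t - i))"

lemma wgt_nonneg: "wgt K T J t \<ge> 0"
  unfolding wgt_def by (intro sum_nonneg Fk_nonneg)

lemma wgt_res:
  fixes K T D :: nat and a \<gamma> :: int
  assumes J: "finite J" and K: "K > 0" and D: "D > 0" and DT: "D dvd T" and KD: "K * D \<le> T"
    and \<gamma>: "0 \<le> \<gamma>" "\<gamma> < int D"
  shows "(\<Sum>t\<in>{a..<a+int T}. wgt K T J t * (if t mod int D = \<gamma> then 1 else 0)) = card J / real D"
proof -
  have "(\<Sum>t\<in>{a..<a+int T}. wgt K T J t * (if t mod int D = \<gamma> then 1 else 0))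
      = (\<Sum>i\<in>J. \<Sum>t\<in>{a..<a+int T}. Fk K T (t - i) * (if t mod int D = \<gamma> then 1 else 0))"
    unfolding wgt_def sum_distrib_right by (rule sum.swap)
  also have "\<dots> = (\<Sum>i\<in>J. 1 / real D)"
    using Fk_res[OF K D DT KD \<gamma>] by simp
  finally show ?thesis by simp
qed

lemma wgt_lower:
  fixes K R T :: nat and m :: int
  assumes J: "finite J" and K: "K > 0" and R: "R > 0" and T: "T = 6*K*R"
    and sub: "{m - int R..m + int R} \<subseteq> J"
  shows "wgt K T J m \<ge> 1/6"
proof -
  have "(\<Sum>i\<in>{m - int R..m + int R}. real K / (2 * real T)) \<le> (\<Sum>i\<in>{m - int R..m + int R}. Fk K T (m - i))"
    by (intro sum_mono Fk_lower[OF K R T]) auto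
  also have "\<dots> \<le> wgt K T J m"
    unfolding wgt_def using J sub by (intro sum_mono2 Fk_nonneg) auto
  finally have "real (2 * R + 1) * (real K / (2 * real T)) \<le> wgt K T J m"
    by (simp add: add.commute)
  moreover have "real (2 * R + 1) * (real K / (2 * real T)) \<ge> 1/6"
    using K R T by (simp add: field_simps)
  ultimately show ?thesis by linarith
qed

definition vecs :: "nat \<Rightarrow> (nat \<Rightarrow> int set) \<Rightarrow> (nat \<Rightarrow> int) set" where
  "vecs n I = {m. (\<forall>j<n. m j \<in> I j) \<and> (\<forall>j\<ge>n. m j = 0)}"

lemma vecs_image: "vecs n I = (\<lambda>g j. if j < n then g j else 0) ` PiE {..<n} I"
proof (rule set_eqI, rule iffI)
  fix m assume m: "m \<in> vecs n I"
  have "m = (\<lambda>j. if j < n then restrict m {..<n} j else 0)"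
    using m by (intro ext) (auto simp: vecs_def)
  moreover have "restrict m {..<n} \<in> PiE {..<n} I" using m by (auto simp: vecs_def)
  ultimately show "m \<in> (\<lambda>g j. if j < n then g j else 0) ` PiE {..<n} I" by blast
next
  fix m assume "m \<in> (\<lambda>g j. if j < n then g j else 0) ` PiE {..<n} I"
  then obtain g where g: "g \<in> PiE {..<n} I" and m: "m = (\<lambda>j. if j < n then g j else 0)" by blast
  show "m \<in> vecs n I" unfolding vecs_def m using g by auto
qed

lemma vecs_finite: "(\<And>j. j < n \<Longrightarrow> finite (I j)) \<Longrightarrow> finite (vecs n I)"
  unfolding vecs_image by (intro finite_imageI finite_PiE) auto

lemma sum_prod_vecs:
  fixes h :: "nat \<Rightarrow> int \<Rightarrow> real"
  assumes fin: "\<And>j. j < n \<Longrightarrow> finite (I j)"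
  shows "(\<Sum>m\<in>vecs n I. \<Prod>j<n. h j (m j)) = (\<Prod>j<n. \<Sum>t\<in>I j. h j t)"
proof -
  have "(\<Prod>j<n. \<Sum>t\<in>I j. h j t) = (\<Sum>g\<in>PiE {..<n} I. \<Prod>j<n. h j (g j))"
    using fin by (intro prod_sum_PiE) auto
  also have "\<dots> = (\<Sum>m\<in>vecs n I. \<Prod>j<n. h j (m j))"
  proof (rule sum.reindex_bij_witness[where i = "\<lambda>m. restrict m {..<n}" and j = "\<lambda>g j. if j < n then g j else 0"])
    fix g assume g: "g \<in> PiE {..<n} I"
    then show "restrict (\<lambda>j. if j < n then g j else 0) {..<n} = g"
    proof (intro ext)
      fix j show "restrict (\<lambda>j. if j < n then g j else 0) {..<n} j = g j"
        using PiE_arb[OF g, of j] by (cases "j < n") simp_all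
    qed
  next
    fix g assume g: "g \<in> PiE {..<n} I"
    then show "(\<lambda>j. if j < n then g j else 0) \<in> vecs n I" by (auto simp: vecs_def)
  next
    fix m assume "m \<in> vecs n I"
    then show "(\<lambda>j. if j < n then restrict m {..<n} j else 0) = m" by (intro ext) (auto simp: vecs_def)
  next
    fix m assume "m \<in> vecs n I"
    then show "restrict m {..<n} \<in> PiE {..<n} I" by (auto simp: vecs_def)
  next
    fix g assume g: "g \<in> PiE {..<n} I"
    show "(\<Prod>j<n. h j (if j < n then g j else 0)) = (\<Prod>j<n. h j (g j))" by simp
  qed
  finally show ?thesis ..
qed

lemma prod_ind:
  fixes n :: nat
  shows "(\<Prod>j<n. (if P j then 1 else 0 :: real)) = (if \<forall>j<n. P j then 1 else 0)"
  by (induction n) (auto simp: less_Suc_eq)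

lemma residue_vecs_eq: "residue_vecs k q = vecs k (\<lambda>_. {0..<q})"
  unfolding residue_vecs_def vecs_def by auto

lemma finite_residue_vecs: "finite (residue_vecs k q)"
  unfolding residue_vecs_eq by (rule vecs_finite) auto

lemma ind_expand:
  fixes \<Omega> :: "(nat \<Rightarrow> int) set"
  assumes sub: "\<Omega> \<subseteq> residue_vecs k q"
  shows "(if vec_mod k q m \<in> \<Omega> then 1 else 0 :: real)
       = (\<Sum>\<alpha>\<in>\<Omega>. \<Prod>j<k. (if m j mod q = \<alpha> j then 1 else 0))"
proof -
  have fin: "finite \<Omega>" using sub finite_residue_vecs finite_subset by blast
  have "(\<Prod>j<k. (if m j mod q = \<alpha> j then 1 else 0 :: real)) = (if vec_mod k q m = \<alpha> then 1 else 0)"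
    if "\<alpha> \<in> \<Omega>" for \<alpha>
  proof -
    have z: "\<forall>j\<ge>k. \<alpha> j = 0" using that sub by (auto simp: residue_vecs_def)
    have "(\<forall>j<k. m j mod q = \<alpha> j) \<longleftrightarrow> vec_mod k q m = \<alpha>"
    proof
      assume "\<forall>j<k. m j mod q = \<alpha> j"
      then show "vec_mod k q m = \<alpha>" using z by (intro ext) (auto simp: vec_mod_def)
    next
      assume h: "vec_mod k q m = \<alpha>"
      show "\<forall>j<k. m j mod q = \<alpha> j"
      proof (intro allI impI)
        fix j assume "j < k"
        then show "m j mod q = \<alpha> j" using fun_cong[OF h, of j] by (simp add: vec_mod_def)
      qed
    qed
    then show ?thesis by (simp add: prod_ind)
  qed
  then have "(\<Sum>\<alpha>\<in>\<Omega>. \<Prod>j<k. (if m j mod q = \<alpha> j then 1 else 0 :: real))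
      = (\<Sum>\<alpha>\<in>\<Omega>. if vec_mod k q m = \<alpha> then 1 else 0)" by (rule sum.cong[OF refl])
  also have "\<dots> = (if vec_mod k q m \<in> \<Omega> then 1 else 0)" using fin by (simp add: sum.delta)
  finally show ?thesis ..
qed

lemma main_bound:
  fixes k N :: nat and \<Omega> :: "nat \<Rightarrow> (nat \<Rightarrow> int) set" and x :: real and M L :: "nat \<Rightarrow> real"
  assumes N: "N \<ge> 1" and \<Omega>sub: "\<And>p. prime p \<Longrightarrow> \<Omega> p \<subseteq> residue_vecs k (int p ^ N)"
    and xpos: "x > 0" and Lbig: "\<And>j. j < k \<Longrightarrow> L j \<ge> x ^ (2 * N)"
  shows "(\<Sum>m\<in>box_points k M L. (real (Pcount k N \<Omega> x m) - Pexp k N \<Omega> x)\<^sup>2)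
           \<le> 24 ^ k * (\<Prod>j<k. L j) * Pexp k N \<Omega> x"
proof -
  define S where "S = {p::nat. prime p \<and> real p \<le> x}"
  have finS: "finite S"
  proof (rule finite_subset)
    show "S \<subseteq> {..nat \<lfloor>x\<rfloor>}" unfolding S_def using le_nat_floor by auto
  qed simp
  define \<omega> where "\<omega> p = real (card (\<Omega> p)) / real p ^ (N * k)" for p
  define ind where "ind p m = (if vec_mod k (int p ^ N) m \<in> \<Omega> p then 1 else 0 :: real)" for p m
  define f where "f p m = ind p m - \<omega> p" for p m
  have Pexp_eq: "Pexp k N \<Omega> x = (\<Sum>p\<in>S. \<omega> p)" unfolding Pexp_def S_def \<omega>_def ..
  have \<omega>_nonneg: "\<omega> p \<ge> 0" for p unfolding \<omega>_def by simp
  have Pexp_nonneg: "Pexp k N \<Omega> x \<ge> 0" unfolding Pexp_eq by (intro sum_nonneg \<omega>_nonneg)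
  have Pc: "real (Pcount k N \<Omega> x m) - Pexp k N \<Omega> x = (\<Sum>p\<in>S. f p m)" for m
  proof -
    have "{p. prime p \<and> real p \<le> x \<and> vec_mod k (int p ^ N) m \<in> \<Omega> p} = {p\<in>S. vec_mod k (int p ^ N) m \<in> \<Omega> p}"
      unfolding S_def by auto
    then have "real (Pcount k N \<Omega> x m) = (\<Sum>p\<in>S. ind p m)"
      unfolding Pcount_def ind_def using finS by (simp add: sum.inter_filter[symmetric])
    then show ?thesis unfolding Pexp_eq f_def by (simp add: sum_subtractf)
  qed
  have LHS_eq: "(\<Sum>m\<in>box_points k M L. (real (Pcount k N \<Omega> x m) - Pexp k N \<Omega> x)\<^sup>2)
      = (\<Sum>m\<in>box_points k M L. (\<Sum>p\<in>S. f p m)\<^sup>2)" by (simp only: Pc)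
  show ?thesis
  proof (cases "S = {}")
    case True
    show ?thesis unfolding LHS_eq unfolding Pexp_eq using True by simp
  next
    case False
    then obtain p0 where "p0 \<in> S" by blast
    then have x2: "x \<ge> 2" unfolding S_def using prime_ge_2_nat[of p0] by force
    have H4: "x ^ (2 * N) \<ge> 4"
    proof -
      have "(2::real) ^ 2 \<le> 2 ^ (2 * N)" using N by (intro power_increasing) auto
      also have "\<dots> \<le> x ^ (2 * N)" using x2 by (intro power_mono) auto
      finally show ?thesis by simp
    qed
    have L4: "L j \<ge> 4" if "j < k" for j using Lbig[OF that] H4 by linarith
    have x1: "x \<ge> 1" using x2 by simp
    define K where "K = (\<Prod>p\<in>S. p ^ (2 * N))"
    have Kpos: "K > 0" unfolding K_def using finS by (intro prod_pos) (auto simp: S_def prime_gt_0_nat)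
    define R where "R j = nat \<lceil>L j\<rceil>" for j
    have R_ge: "real (R j) \<ge> L j" for j unfolding R_def by linarith
    have R_le: "real (R j) \<le> L j + 1" if "j < k" for j using L4[OF that] unfolding R_def by linarith
    have Rpos: "R j > 0" if "j < k" for j using L4[OF that] R_ge[of j] by linarith
    define T where "T j = 6 * K * R j" for j
    define I where "I j = {\<lceil>M j\<rceil> ..< \<lceil>M j\<rceil> + int (T j)}" for j
    define J where "J j = {\<lceil>M j\<rceil> - int (R j) .. \<lfloor>M j + L j\<rfloor> + int (R j)}" for j
    define w where "w j t = wgt K (T j) (J j) t" for j t
    define Wp where "Wp = (\<Prod>j<k. real (card (J j)))"
    define ww where "ww m = (\<Prod>j<k. w j (m j))" for m
    define Win where "Win = vecs k I"
    have finWin: "finite Win" unfolding Win_def I_def by (rule vecs_finite) simp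
    have box_sub: "box_points k M L \<subseteq> Win"
    proof
      fix m assume m: "m \<in> box_points k M L"
      have "m j \<in> I j" if j: "j < k" for j
      proof -
        have a: "M j \<le> real_of_int (m j)" "real_of_int (m j) \<le> M j + L j" using m j by (auto simp: box_points_def)
        have "R j \<le> K * R j" using Kpos by (cases K) auto
        then have "6 * R j \<le> T j" unfolding T_def by simp
        then have "real (6 * R j) \<le> real (T j)" by (simp only: of_nat_le_iff)
        then have "real (T j) \<ge> 6 * real (R j)" by simp
        then have "real (T j) > L j" using R_ge[of j] L4[OF j] by linarith
        then have "real_of_int (m j) < real_of_int \<lceil>M j\<rceil> + real (T j)" using a le_of_int_ceiling[of "M j"] by linarith
        then have "m j < \<lceil>M j\<rceil> + int (T j)" by linarith
        moreover have "\<lceil>M j\<rceil> \<le> m j" using a by (simp add: ceiling_le_iff)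
        ultimately show ?thesis unfolding I_def by simp
      qed
      then show "m \<in> Win" using m unfolding Win_def vecs_def box_points_def by auto
    qed
    have ww_nonneg: "ww m \<ge> 0" for m unfolding ww_def w_def by (intro prod_nonneg wgt_nonneg)
    have ww_lower: "1 \<le> 6 ^ k * ww m" if m: "m \<in> box_points k M L" for m
    proof -
      have "(\<Prod>j<k. (1/6::real)) \<le> ww m" unfolding ww_def
      proof (rule prod_mono)
        fix j assume j: "j \<in> {..<k}"
        have a: "M j \<le> real_of_int (m j)" "real_of_int (m j) \<le> M j + L j" using m j by (auto simp: box_points_def)
        have "{m j - int (R j)..m j + int (R j)} \<subseteq> J j" unfolding J_def using a
          by (auto simp: ceiling_le_iff le_floor_iff)
        then have "w j (m j) \<ge> 1/6" unfolding w_def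
          by (intro wgt_lower[OF _ Kpos Rpos]) (use j in \<open>auto simp: J_def T_def\<close>)
        then show "0 \<le> (1/6::real) \<and> 1/6 \<le> w j (m j)" by simp
      qed
      then have "(1/6::real) ^ k \<le> ww m" by simp
      then have "6 ^ k * (1/6::real) ^ k \<le> 6 ^ k * ww m" by simp
      then show ?thesis by (simp add: power_one_over)
    qed
    have card_J: "real (card (J j)) \<le> 4 * L j" if j: "j < k" for j
    proof -
      have "\<lfloor>M j + L j\<rfloor> \<ge> \<lceil>M j\<rceil> - 1" using L4[OF j] by linarith
      then have "real (card (J j)) = real_of_int (\<lfloor>M j + L j\<rfloor> + int (R j) - (\<lceil>M j\<rceil> - int (R j)) + 1)"
        unfolding J_def by simp
      also have "\<dots> \<le> L j + 2 * real (R j) + 1" by simp linarith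
      also have "\<dots> \<le> 4 * L j" using R_le[OF j] L4[OF j] by linarith
      finally show ?thesis .
    qed
    have S0: "(\<Sum>t\<in>I j. w j t * (if t mod int D = \<gamma> then 1 else 0)) = real (card (J j)) / real D"
      if j: "j < k" and D: "D > 0" "D dvd K" "D \<le> R j" and \<gamma>: "0 \<le> \<gamma>" "\<gamma> < int D" for j D \<gamma>
      unfolding I_def w_def
    proof (rule wgt_res)
      show "finite (J j)" unfolding J_def by simp
      show "D dvd T j" unfolding T_def using D by simp
      show "K * D \<le> T j" unfolding T_def using D by simp
    qed (use Kpos D \<gamma> in auto)
    have Wsum: "(\<Sum>m\<in>Win. ww m * (\<Prod>j<k. g j (m j))) = (\<Prod>j<k. \<Sum>t\<in>I j. w j t * g j t)" for g
    proof -
      have "(\<Sum>m\<in>Win. ww m * (\<Prod>j<k. g j (m j))) = (\<Sum>m\<in>Win. \<Prod>j<k. w j (m j) * g j (m j))"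
        unfolding ww_def by (simp add: prod.distrib)
      also have "\<dots> = (\<Prod>j<k. \<Sum>t\<in>I j. w j t * g j t)"
        unfolding Win_def by (rule sum_prod_vecs) (simp add: I_def)
      finally show ?thesis .
    qed
    have pS: "prime p" "real p \<le> x" if "p \<in> S" for p using that unfolding S_def by auto
    have pN_le: "real (p ^ N) \<le> real (R j)" if "p \<in> S" "j < k" for p j
    proof -
      have "real (p ^ N) = real p ^ N" by simp
      also have "\<dots> \<le> x ^ N" using pS[OF that(1)] by (intro power_mono) auto
      also have "\<dots> \<le> x ^ (2 * N)" using x1 by (intro power_increasing) auto
      also have "\<dots> \<le> L j" using Lbig[OF that(2)] .
      also have "\<dots> \<le> real (R j)" by (rule R_ge)
      finally show ?thesis .
    qed
    have pN_dvd: "p ^ N dvd K" if "p \<in> S" for p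
    proof -
      have "p ^ N dvd p ^ (2 * N)" by (intro le_imp_power_dvd) simp
      also have "p ^ (2 * N) dvd K" unfolding K_def using finS that by (rule dvd_prodI)
      finally show ?thesis .
    qed
    have fin\<Omega>: "finite (\<Omega> p)" if "p \<in> S" for p
      using \<Omega>sub[OF pS(1)[OF that]] finite_residue_vecs finite_subset by blast
    have \<alpha>range: "0 \<le> \<alpha> j \<and> \<alpha> j < int (p ^ N)" if "p \<in> S" "\<alpha> \<in> \<Omega> p" "j < k" for p \<alpha> j
      using \<Omega>sub[OF pS(1)[OF that(1)]] that(2,3) unfolding residue_vecs_def by auto
    have S1: "(\<Sum>m\<in>Win. ww m) = Wp"
    proof -
      have "(\<Sum>m\<in>Win. ww m) = (\<Sum>m\<in>Win. ww m * (\<Prod>j<k. (\<lambda>_ _. 1::real) j (m j)))" by simp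
      also have "\<dots> = (\<Prod>j<k. \<Sum>t\<in>I j. w j t * 1)" by (rule Wsum)
      also have "\<dots> = (\<Prod>j<k. real (card (J j)))"
      proof (rule prod.cong[OF refl])
        fix j assume j: "j \<in> {..<k}"
        have "(\<Sum>t\<in>I j. w j t * (if t mod int 1 = 0 then 1 else 0)) = real (card (J j)) / real 1"
          using j Rpos[of j] by (intro S0) auto
        then show "(\<Sum>t\<in>I j. w j t * 1) = real (card (J j))" by simp
      qed
      finally show ?thesis unfolding Wp_def .
    qed
    have S3: "(\<Sum>m\<in>Win. ww m * ind p m) = Wp * \<omega> p" if p: "p \<in> S" for p
    proof -
      have "(\<Sum>m\<in>Win. ww m * ind p m)
          = (\<Sum>m\<in>Win. ww m * (\<Sum>\<alpha>\<in>\<Omega> p. \<Prod>j<k. (if m j mod (int p ^ N) = \<alpha> j then 1 else 0)))"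
        unfolding ind_def using ind_expand[OF \<Omega>sub[OF pS(1)[OF p]]] by simp
      also have "\<dots> = (\<Sum>\<alpha>\<in>\<Omega> p. \<Sum>m\<in>Win. ww m * (\<Prod>j<k. (\<lambda>j t. if t mod (int p ^ N) = \<alpha> j then 1 else 0) j (m j)))"
        by (simp add: sum_distrib_left sum.swap[of _ Win])
      also have "\<dots> = (\<Sum>\<alpha>\<in>\<Omega> p. \<Prod>j<k. real (card (J j)) / real (p ^ N))"
      proof (rule sum.cong[OF refl])
        fix \<alpha> assume \<alpha>: "\<alpha> \<in> \<Omega> p"
        show "(\<Sum>m\<in>Win. ww m * (\<Prod>j<k. (\<lambda>j t. if t mod (int p ^ N) = \<alpha> j then 1 else 0) j (m j)))
            = (\<Prod>j<k. real (card (J j)) / real (p ^ N))"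
          unfolding Wsum[of "\<lambda>j t. if t mod (int p ^ N) = \<alpha> j then 1 else 0"]
        proof (rule prod.cong[OF refl])
          fix j assume j: "j \<in> {..<k}"
          have "(\<Sum>t\<in>I j. w j t * (if t mod int (p ^ N) = \<alpha> j then 1 else 0)) = real (card (J j)) / real (p ^ N)"
            using j \<alpha>range[OF p \<alpha>, of j] pN_dvd[OF p] pN_le[OF p, of j] pS(1)[OF p]
            by (intro S0) (auto simp: prime_gt_0_nat)
          then show "(\<Sum>t\<in>I j. w j t * (if t mod (int p ^ N) = \<alpha> j then 1 else 0)) = real (card (J j)) / real (p ^ N)"
            by simp
        qed
      qed
      also have "\<dots> = real (card (\<Omega> p)) * (Wp / real (p ^ N) ^ k)"
        unfolding Wp_def by (simp add: prod_dividef)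
      also have "\<dots> = Wp * \<omega> p" unfolding \<omega>_def by (simp add: power_mult field_simps)
      finally show ?thesis .
    qed
    have S4: "(\<Sum>m\<in>Win. ww m * (ind p m * ind q m)) = Wp * \<omega> p * \<omega> q"
      if p: "p \<in> S" and q: "q \<in> S" and pq: "p \<noteq> q" for p q
    proof -
      define P where "P = p ^ N"
      define Q where "Q = q ^ N"
      have P0: "P > 0" "Q > 0" unfolding P_def Q_def using pS(1)[OF p] pS(1)[OF q] by (auto simp: prime_gt_0_nat)
      have cop: "coprime (int P) (int Q)"
      proof -
        have "coprime p q" using primes_coprime pS(1)[OF p] pS(1)[OF q] pq by blast
        then have "coprime P Q" unfolding P_def Q_def by simp
        then show ?thesis by (simp add: coprime_int_iff)
      qed
      have PQ_dvd: "P * Q dvd K"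
      proof -
        have "P * Q dvd p ^ (2 * N) * q ^ (2 * N)" unfolding P_def Q_def
          by (intro mult_dvd_mono le_imp_power_dvd) auto
        also have "p ^ (2 * N) * q ^ (2 * N) = (\<Prod>r\<in>{p, q}. r ^ (2 * N))" using pq by simp
        also have "\<dots> dvd K" unfolding K_def using finS p q by (intro prod_dvd_prod_subset) auto
        finally show ?thesis .
      qed
      have PQ_le: "real (P * Q) \<le> real (R j)" if j: "j < k" for j
      proof -
        have "real (P * Q) = (real p * real q) ^ N" unfolding P_def Q_def by (simp add: power_mult_distrib)
        also have "\<dots> \<le> (x * x) ^ N" using pS[OF p] pS[OF q] by (intro power_mono mult_mono) auto
        also have "\<dots> = x ^ (2 * N)" by (simp add: power_mult power2_eq_square[symmetric] power_mult_distrib)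
        also have "\<dots> \<le> L j" using Lbig[OF j] .
        also have "\<dots> \<le> real (R j)" by (rule R_ge)
        finally show ?thesis .
      qed
      have ip: "ind p m = (\<Sum>\<alpha>\<in>\<Omega> p. \<Prod>j<k. (if m j mod int P = \<alpha> j then 1 else 0))" for m
        unfolding ind_def P_def using ind_expand[OF \<Omega>sub[OF pS(1)[OF p]]] by simp
      have iq: "ind q m = (\<Sum>\<beta>\<in>\<Omega> q. \<Prod>j<k. (if m j mod int Q = \<beta> j then 1 else 0))" for m
        unfolding ind_def Q_def using ind_expand[OF \<Omega>sub[OF pS(1)[OF q]]] by simp
      have "(\<Sum>m\<in>Win. ww m * (ind p m * ind q m))
          = (\<Sum>m\<in>Win. \<Sum>\<alpha>\<in>\<Omega> p. \<Sum>\<beta>\<in>\<Omega> q. ww m * (\<Prod>j<k. (\<lambda>j t. (if t mod int P = \<alpha> j then 1 else 0) * (if t mod int Q = \<beta> j then 1 else 0)) j (m j)))"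
        unfolding ip iq sum_product prod.distrib by (simp only: sum_distrib_left)
      also have "\<dots> = (\<Sum>\<alpha>\<in>\<Omega> p. \<Sum>\<beta>\<in>\<Omega> q. \<Sum>m\<in>Win. ww m * (\<Prod>j<k. (\<lambda>j t. (if t mod int P = \<alpha> j then 1 else 0) * (if t mod int Q = \<beta> j then 1 else 0)) j (m j)))"
        by (simp add: sum.swap[of _ Win])
      also have "\<dots> = (\<Sum>\<alpha>\<in>\<Omega> p. \<Sum>\<beta>\<in>\<Omega> q. \<Prod>j<k. real (card (J j)) / real (P * Q))"
      proof (intro sum.cong refl)
        fix \<alpha> \<beta> assume \<alpha>: "\<alpha> \<in> \<Omega> p" and \<beta>: "\<beta> \<in> \<Omega> q"
        show "(\<Sum>m\<in>Win. ww m * (\<Prod>j<k. (\<lambda>j t. (if t mod int P = \<alpha> j then 1 else 0) * (if t mod int Q = \<beta> j then 1 else 0)) j (m j)))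
            = (\<Prod>j<k. real (card (J j)) / real (P * Q))"
          unfolding Wsum[of "\<lambda>j t. (if t mod int P = \<alpha> j then 1 else 0) * (if t mod int Q = \<beta> j then 1 else 0)"]
        proof (rule prod.cong[OF refl])
          fix j assume j: "j \<in> {..<k}"
          have ra: "0 \<le> \<alpha> j" "\<alpha> j < int P" using \<alpha>range[OF p \<alpha>, of j] j unfolding P_def by auto
          have rb: "0 \<le> \<beta> j" "\<beta> j < int Q" using \<alpha>range[OF q \<beta>, of j] j unfolding Q_def by auto
          obtain \<gamma> where \<gamma>: "0 \<le> \<gamma>" "\<gamma> < int P * int Q"
            and eq: "\<And>t. (t mod int P = \<alpha> j \<and> t mod int Q = \<beta> j) \<longleftrightarrow> t mod (int P * int Q) = \<gamma>"
            using crt_mod[OF _ _ cop ra rb] P0 by auto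
          have "(\<Sum>t\<in>I j. w j t * ((if t mod int P = \<alpha> j then 1 else 0) * (if t mod int Q = \<beta> j then 1 else 0)))
              = (\<Sum>t\<in>I j. w j t * (if t mod int (P * Q) = \<gamma> then 1 else 0))"
            by (intro sum.cong refl) (use eq in auto)
          also have "\<dots> = real (card (J j)) / real (P * Q)"
            using j \<gamma> PQ_dvd PQ_le[of j] P0 of_nat_le_iff[of "P * Q" "R j"] by (intro S0) auto
          finally show "(\<Sum>t\<in>I j. w j t * ((if t mod int P = \<alpha> j then 1 else 0) * (if t mod int Q = \<beta> j then 1 else 0)))
              = real (card (J j)) / real (P * Q)" .
        qed
      qed
      also have "\<dots> = real (card (\<Omega> p)) * real (card (\<Omega> q)) * (Wp / (real P ^ k * real Q ^ k))"
        unfolding Wp_def by (simp add: prod_dividef power_mult_distrib)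
      also have "\<dots> = Wp * \<omega> p * \<omega> q" unfolding \<omega>_def P_def Q_def by (simp add: power_mult field_simps)
      finally show ?thesis .
    qed
    have C: "(\<Sum>m\<in>Win. ww m * (f p m * f q m)) = (if p = q then Wp * (\<omega> p * (1 - \<omega> p)) else 0)"
      if p: "p \<in> S" and q: "q \<in> S" for p q
    proof -
      have e: "ww m * (f p m * f q m) = ww m * (ind p m * ind q m) - \<omega> q * (ww m * ind p m)
          - \<omega> p * (ww m * ind q m) + \<omega> p * \<omega> q * ww m" for m
        unfolding f_def by (simp add: algebra_simps)
      have "(\<Sum>m\<in>Win. ww m * (f p m * f q m)) = (\<Sum>m\<in>Win. ww m * (ind p m * ind q m))
          - \<omega> q * (\<Sum>m\<in>Win. ww m * ind p m) - \<omega> p * (\<Sum>m\<in>Win. ww m * ind q m) + \<omega> p * \<omega> q * (\<Sum>m\<in>Win. ww m)"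
        unfolding e by (simp add: sum.distrib sum_subtractf sum_distrib_left)
      also have "\<dots> = (if p = q then Wp * (\<omega> p * (1 - \<omega> p)) else 0)"
      proof (cases "p = q")
        case True
        have sq: "(\<Sum>m\<in>Win. ww m * (ind p m * ind p m)) = (\<Sum>m\<in>Win. ww m * ind p m)"
          unfolding ind_def by (intro sum.cong refl) simp
        show ?thesis unfolding True[symmetric] sq S3[OF p] S1 by (simp add: algebra_simps)
      next
        case False
        then show ?thesis using S4[OF p q False] S3[OF p] S3[OF q] S1 by (simp add: algebra_simps)
      qed
      finally show ?thesis .
    qed
    define G where "G m = (\<Sum>p\<in>S. f p m)\<^sup>2" for m
    have G_nonneg: "G m \<ge> 0" for m unfolding G_def by simp
    have Wp_nonneg: "Wp \<ge> 0" unfolding Wp_def by (intro prod_nonneg) auto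
    have "(\<Sum>m\<in>box_points k M L. G m) \<le> (\<Sum>m\<in>box_points k M L. 6 ^ k * (ww m * G m))"
    proof (rule sum_mono)
      fix m assume m: "m \<in> box_points k M L"
      have "1 * G m \<le> (6 ^ k * ww m) * G m" using ww_lower[OF m] G_nonneg[of m] by (intro mult_right_mono) auto
      then show "G m \<le> 6 ^ k * (ww m * G m)" by (simp add: mult.assoc)
    qed
    also have "\<dots> = 6 ^ k * (\<Sum>m\<in>box_points k M L. ww m * G m)" by (simp add: sum_distrib_left)
    also have "\<dots> \<le> 6 ^ k * (\<Sum>m\<in>Win. ww m * G m)"
      using finWin box_sub ww_nonneg G_nonneg by (intro mult_left_mono sum_mono2) auto
    also have "(\<Sum>m\<in>Win. ww m * G m) = (\<Sum>p\<in>S. \<Sum>q\<in>S. \<Sum>m\<in>Win. ww m * (f p m * f q m))"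
    proof -
      have "(\<Sum>m\<in>Win. ww m * G m) = (\<Sum>m\<in>Win. \<Sum>p\<in>S. \<Sum>q\<in>S. ww m * (f p m * f q m))"
        unfolding G_def power2_eq_square sum_product by (simp only: sum_distrib_left)
      also have "\<dots> = (\<Sum>p\<in>S. \<Sum>q\<in>S. \<Sum>m\<in>Win. ww m * (f p m * f q m))"
        by (simp add: sum.swap[of _ Win])
      finally show ?thesis .
    qed
    also have "\<dots> = (\<Sum>p\<in>S. \<Sum>q\<in>S. if p = q then Wp * (\<omega> p * (1 - \<omega> p)) else 0)"
      using C by (intro sum.cong refl) auto
    also have "\<dots> = (\<Sum>p\<in>S. Wp * (\<omega> p * (1 - \<omega> p)))"
      using finS by (simp add: sum.delta)
    also have "\<dots> \<le> (\<Sum>p\<in>S. Wp * \<omega> p)"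
    proof (rule sum_mono)
      fix p assume "p \<in> S"
      have "\<omega> p * (1 - \<omega> p) \<le> \<omega> p" by (simp add: algebra_simps)
      then show "Wp * (\<omega> p * (1 - \<omega> p)) \<le> Wp * \<omega> p" using Wp_nonneg by (rule mult_left_mono)
    qed
    also have "\<dots> = Wp * Pexp k N \<Omega> x" unfolding Pexp_eq by (simp add: sum_distrib_left)
    finally have main: "(\<Sum>m\<in>box_points k M L. G m) \<le> 6 ^ k * (Wp * Pexp k N \<Omega> x)"
      by (simp add: mult_left_mono)
    have "Wp \<le> (\<Prod>j<k. 4 * L j)" unfolding Wp_def
      by (intro prod_mono) (auto simp: card_J)
    also have "\<dots> = 4 ^ k * (\<Prod>j<k. L j)" by (simp add: prod.distrib)
    finally have "6 ^ k * (Wp * Pexp k N \<Omega> x) \<le> 6 ^ k * (4 ^ k * (\<Prod>j<k. L j) * Pexp k N \<Omega> x)"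
      using Pexp_nonneg by (intro mult_left_mono mult_right_mono) auto
    also have "\<dots> = 24 ^ k * (\<Prod>j<k. L j) * Pexp k N \<Omega> x"
      by (simp add: power_mult_distrib[symmetric])
    finally show ?thesis unfolding LHS_eq G_def[symmetric] using main by linarith
  qed
qed

theorem theorem5p3:
  fixes k N :: nat
  assumes "k \<ge> 1" and "N \<ge> 1"
  shows "\<exists>c>0. \<forall>(\<Omega> :: nat \<Rightarrow> (nat \<Rightarrow> int) set) (x::real) (M::nat \<Rightarrow> real) (L::nat \<Rightarrow> real).
           (\<forall>p. prime p \<longrightarrow> \<Omega> p \<subseteq> residue_vecs k (int p ^ N)) \<longrightarrow>
           x > 0 \<longrightarrow>
           (\<forall>j<k. L j \<ge> x ^ (2 * N)) \<longrightarrow>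
           (\<Sum>m\<in>box_points k M L. (real (Pcount k N \<Omega> x m) - Pexp k N \<Omega> x)\<^sup>2)
             \<le> c * (\<Prod>j<k. L j) * Pexp k N \<Omega> x"
proof (intro exI[of _ "24 ^ k"] conjI allI impI)
  show "(0::real) < 24 ^ k" by simp
next
  fix \<Omega> :: "nat \<Rightarrow> (nat \<Rightarrow> int) set" and x :: real and M L :: "nat \<Rightarrow> real"
  assume h1: "\<forall>p. prime p \<longrightarrow> \<Omega> p \<subseteq> residue_vecs k (int p ^ N)"
    and h2: "x > 0" and h3: "\<forall>j<k. L j \<ge> x ^ (2 * N)"
  show "(\<Sum>m\<in>box_points k M L. (real (Pcount k N \<Omega> x m) - Pexp k N \<Omega> x)\<^sup>2)
             \<le> 24 ^ k * (\<Prod>j<k. L j) * Pexp k N \<Omega> x"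
    using h1 h2 h3 assms(2) by (intro main_bound) auto
qed

end
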